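(* If $M\rightarrow_v N$, $t$ is a canonical term of $\Phi$ and $\langle\!\langle t\rangle\!\rangle=M$, then $t\rightarrow u$ in $\Phi$ for some term $u$ with $\langle\!\langle u\rangle\!\rangle=N$.
   Context: $\lambda$-terms: $M::=x\mid\lambda x.M\mid MN$, variables from a set $\Upsilon$ with a fixed total order, $FV(M)$ the ordered sequence of free variables. Values $V::=x\mid\lambda x.M$; weak call-by-value reduction $\rightarrow_v$: $(\lambda x.M)V\rightarrow_v M\{V/x\}$ for values $V$, closed under $ML$ and $LM$ contexts (no reduction under $\lambda$). $\Phi$: binary function symbol $\mathbf{app}$, constructors $c_{x,M}$ ($M$ a $\lambda$-term, $x\in\Upsilon$) of arity the length of $FV(\lambda x.M)$; $[\![x]\!]=x$, $[\![\lambda x.M]\!]=c_{x,M}(x_1,\dots,x_n)$ with $FV(\lambda x.M)=x_1,\dots,x_n$, $[\![MN]\!]=\mathbf{app}([\![M]\!],[\![N]\!])$; rules $\mathbf{app}(c_{x,M}(x_1,\dots,x_n),x)\rightarrow[\![M]\!]$; rewriting is call-by-value (a step replaces anywhere a subterm $l\sigma$ by $r\sigma$, $\sigma$ mapping variables to constructor terms, i.e. closed terms built only from constructors). $\langle\!\langle x\rangle\!\rangle=x$, $\langle\!\langle\mathbf{app}(u,v)\rangle\!\rangle=\langle\!\langle u\rangle\!\rangle\langle\!\langle v\rangle\!\rangle$, $\langle\!\langle c_{x,M}(t_1,\dots,t_n)\rangle\!\rangle=(\lambda x.M)\{\langle\!\langle t_1\rangle\!\rangle/x_1,\dots,\langle\!\langle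 t_n\rangle\!\rangle/x_n\}$. A closed term $t$ is canonical if it is a constructor term or $t=\mathbf{app}(u,v)$ with $u,v$ canonical. *)

theory Defs
  imports Main
begin

datatype lam = Var nat | Lam nat lam | App lam lam

fun fv :: "lam \<Rightarrow> nat set" where
  "fv (Var x) = {x}"
| "fv (Lam x M) = fv M - {x}"
| "fv (App M N) = fv M \<union> fv N"

definition fvs :: "lam \<Rightarrow> nat list" where
  "fvs M = sorted_list_of_set (fv M)"

text \<open>Simultaneous substitution (a partial map from variables to terms).
  Only ever applied with closed substituted terms, where it is capture-free.\<close>
fun psubst :: "(nat \<Rightarrow> lam option) \<Rightarrow> lam \<Rightarrow> lam" where
  "psubst \<sigma> (Var y) = (case \<sigma> y of None \<Rightarrow> Var y | Some N \<Rightarrow> N)"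
| "psubst \<sigma> (Lam y M) = Lam y (psubst (\<sigma>(y := None)) M)"
| "psubst \<sigma> (App M N) = App (psubst \<sigma> M) (psubst \<sigma> N)"

fun is_value :: "lam \<Rightarrow> bool" where
  "is_value (Var x) = True"
| "is_value (Lam x M) = True"
| "is_value (App M N) = False"

inductive betav :: "lam \<Rightarrow> lam \<Rightarrow> bool" where
  beta: "is_value V \<Longrightarrow> betav (App (Lam x M) V) (psubst (Map.empty(x \<mapsto> V)) M)"
| appL: "betav M M' \<Longrightarrow> betav (App M L) (App M' L)"
| appR: "betav M M' \<Longrightarrow> betav (App L M) (App L M')"

text \<open>Terms over the signature: variables, binary app, constructors c_{x,M}.\<close>
datatype trm = TV nat | TApp trm trm | TC nat lam "trm list"

inductive is_cterm :: "trm \<Rightarrow> bool" where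
  "length ts = length (fvs (Lam x M)) \<Longrightarrow> (\<forall>t\<in>set ts. is_cterm t) \<Longrightarrow> is_cterm (TC x M ts)"

fun enc :: "lam \<Rightarrow> trm" where
  "enc (Var x) = TV x"
| "enc (Lam x M) = TC x M (map TV (fvs (Lam x M)))"
| "enc (App M N) = TApp (enc M) (enc N)"

definition rules :: "(trm \<times> trm) set" where
  "rules = {(TApp (TC x M (map TV (fvs (Lam x M)))) (TV x), enc M) | x M. True}"

fun inst :: "(nat \<Rightarrow> trm) \<Rightarrow> trm \<Rightarrow> trm" where
  "inst \<sigma> (TV y) = \<sigma> y"
| "inst \<sigma> (TApp u v) = TApp (inst \<sigma> u) (inst \<sigma> v)"
| "inst \<sigma> (TC x M ts) = TC x M (map (inst \<sigma>) ts)"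

inductive rstep :: "trm \<Rightarrow> trm \<Rightarrow> bool" where
  root: "(l, r) \<in> rules \<Longrightarrow> (\<forall>y. is_cterm (\<sigma> y)) \<Longrightarrow> rstep (inst \<sigma> l) (inst \<sigma> r)"
| appL: "rstep u u' \<Longrightarrow> rstep (TApp u v) (TApp u' v)"
| appR: "rstep v v' \<Longrightarrow> rstep (TApp u v) (TApp u v')"
| arg: "i < length ts \<Longrightarrow> rstep (ts ! i) t' \<Longrightarrow> rstep (TC x M ts) (TC x M (ts[i := t']))"

fun dec :: "trm \<Rightarrow> lam" where
  "dec (TV x) = Var x"
| "dec (TApp u v) = App (dec u) (dec v)"
| "dec (TC x M ts) = psubst (map_of (zip (fvs (Lam x M)) (map dec ts))) (Lam x M)"

inductive canonical :: "trm \<Rightarrow> bool" where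
  "is_cterm t \<Longrightarrow> canonical t"
| "canonical u \<Longrightarrow> canonical v \<Longrightarrow> canonical (TApp u v)"

end

theory Submission
  imports Defs
begin

lemma psubst_cong: "(\<forall>z\<in>fv M. \<sigma> z = \<tau> z) \<Longrightarrow> psubst \<sigma> M = psubst \<tau> M"
  by (induction M arbitrary: \<sigma> \<tau>) auto

lemma psubst_empty: "psubst Map.empty M = M"
  by (induction M) auto

lemma psubst_closed: "fv N = {} \<Longrightarrow> psubst \<tau> N = N"
  using psubst_cong[of N \<tau> Map.empty] psubst_empty by auto

lemma psubst_comp:
  "(\<forall>z N. \<rho> z = Some N \<longrightarrow> fv N = {}) \<Longrightarrow>
   psubst \<tau> (psubst \<rho> P) = psubst (\<lambda>z. case \<rho> z of None \<Rightarrow> \<tau> z | Some N \<Rightarrow> Some N) P"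
proof (induction P arbitrary: \<rho> \<tau>)
  case (Var z) then show ?case by (cases "\<rho> z") (auto simp: psubst_closed)
next
  case (Lam y Q)
  have "(\<lambda>z. case (\<rho>(y:=None)) z of None \<Rightarrow> (\<tau>(y:=None)) z | Some N \<Rightarrow> Some N)
      = (\<lambda>z. case \<rho> z of None \<Rightarrow> \<tau> z | Some N \<Rightarrow> Some N)(y:=None)" by (rule ext) (simp split: option.split)
  moreover have "\<forall>z N. (\<rho>(y:=None)) z = Some N \<longrightarrow> fv N = {}" using Lam.prems by auto
  ultimately show ?case using Lam.IH by simp
next
  case (App M N) then show ?case by simp
qed

lemma fv_psubst:
  "(\<forall>z N. \<rho> z = Some N \<longrightarrow> fv N = {}) \<Longrightarrow> fv (psubst \<rho> M) \<subseteq> {z\<in>fv M. \<rho> z = None}"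
proof (induction M arbitrary: \<rho>)
  case (Var z) then show ?case by (cases "\<rho> z") auto
next
  case (Lam y Q)
  have cl: "\<forall>z N. (\<rho>(y:=None)) z = Some N \<longrightarrow> fv N = {}" using Lam.prems by auto
  have h: "fv (psubst (\<rho>(y:=None)) Q) \<subseteq> {z\<in>fv Q. (\<rho>(y:=None)) z = None}" by (rule Lam.IH[OF cl])
  show ?case
  proof
    fix z assume "z \<in> fv (psubst \<rho> (Lam y Q))"
    then have z: "z \<in> fv (psubst (\<rho>(y:=None)) Q)" "z \<noteq> y" by simp_all
    then have "z \<in> fv Q" "(\<rho>(y:=None)) z = None" using h by blast+
    then show "z \<in> {z \<in> fv (Lam y Q). \<rho> z = None}" using z(2) by simp
  qed
next
  case (App M N)
  have "fv (psubst \<rho> M) \<subseteq> {z\<in>fv M. \<rho> z = None}" by (rule App.IH(1)[OF App.prems])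
  moreover have "fv (psubst \<rho> N) \<subseteq> {z\<in>fv N. \<rho> z = None}" by (rule App.IH(2)[OF App.prems])
  ultimately show ?case by auto
qed

lemma finite_fv: "finite (fv M)"
  by (induction M) auto

lemma set_fvs: "set (fvs M) = fv M"
  by (simp add: fvs_def finite_fv)

lemma distinct_fvs: "distinct (fvs M)"
  by (simp add: fvs_def)

lemma map_of_zip_map2: "map_of (zip xs (map f ys)) z = map_option f (map_of (zip xs ys) z)"
  by (induction xs arbitrary: ys) (auto simp: zip_Cons1 split: list.splits)

lemma cterm_closed: "is_cterm t \<Longrightarrow> fv (dec t) = {}"
proof (induction rule: is_cterm.induct)
  case (1 ts x M)
  let ?\<rho> = "map_of (zip (fvs (Lam x M)) (map dec ts))"
  have cl: "\<forall>z N. ?\<rho> z = Some N \<longrightarrow> fv N = {}"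
  proof (intro allI impI)
    fix z N assume "?\<rho> z = Some N"
    then have "(z, N) \<in> set (zip (fvs (Lam x M)) (map dec ts))" by (rule map_of_SomeD)
    then have "N \<in> set (map dec ts)" by (rule set_zip_rightD)
    then obtain s where s: "s \<in> set ts" "N = dec s" by auto
    then show "fv N = {}" using 1(2) by blast
  qed
  have dom: "\<forall>z\<in>fv (Lam x M). ?\<rho> z \<noteq> None"
  proof
    fix z assume "z \<in> fv (Lam x M)"
    then have "z \<in> set (fvs (Lam x M))" by (simp only: set_fvs)
    moreover have "dom ?\<rho> = set (fvs (Lam x M))" using 1(1) by (simp add: dom_map_of_zip)
    ultimately show "?\<rho> z \<noteq> None" by blast
  qed
  have "fv (psubst ?\<rho> (Lam x M)) \<subseteq> {z\<in>fv (Lam x M). ?\<rho> z = None}"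
    by (rule fv_psubst[OF cl])
  then have "fv (psubst ?\<rho> (Lam x M)) = {}" using dom by blast
  then show ?case by (simp only: dec.simps)
qed

lemma dec_inst_enc: "dec (inst \<sigma> (enc P)) = psubst (\<lambda>z. Some (dec (\<sigma> z))) P"
proof (induction P)
  case (Var z) then show ?case by simp
next
  case (Lam x Q)
  have "dec (inst \<sigma> (enc (Lam x Q))) =
     Lam x (psubst ((map_of (zip (fvs (Lam x Q)) (map (\<lambda>z. dec (\<sigma> z)) (fvs (Lam x Q)))))(x:=None)) Q)"
    by (simp add: comp_def del: fv.simps)
  also have "\<dots> = Lam x (psubst ((\<lambda>z. Some (dec (\<sigma> z)))(x:=None)) Q)"
    by (rule arg_cong[where f="Lam x"], rule psubst_cong) (auto simp: map_of_zip_map set_fvs)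
  finally show ?case by simp
next
  case (App M N) then show ?case by simp
qed

lemma canonical_dec_Lam:
  assumes "canonical u" "dec u = Lam x M0"
  shows "\<exists>P ts. u = TC x P ts \<and> is_cterm u \<and>
     M0 = psubst ((map_of (zip (fvs (Lam x P)) (map dec ts)))(x:=None)) P"
  using assms
proof cases
  case 1
  then obtain y P ts where u: "u = TC y P ts" by cases auto
  then show ?thesis using assms(2) 1 by auto
next
  case (2 a b) then show ?thesis using assms(2) by auto
qed

lemma canonical_value: "canonical v \<Longrightarrow> is_value (dec v) \<Longrightarrow> is_cterm v"
  by (erule canonical.cases) auto

lemma canonical_App: "canonical t \<Longrightarrow> dec t = App A B \<Longrightarrow>
   \<exists>u v. t = TApp u v \<and> canonical u \<and> canonical v \<and> dec u = A \<and> dec v = B"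
  by (erule canonical.cases) (auto elim: is_cterm.cases)

lemma beta_case:
  assumes "is_value V" "canonical t" "dec t = App (Lam x M0) V"
  shows "\<exists>u. rstep t u \<and> dec u = psubst (Map.empty(x \<mapsto> V)) M0"
proof -
  obtain u v where t: "t = TApp u v" and cu: "canonical u" and cv: "canonical v"
    and du: "dec u = Lam x M0" and dv: "dec v = V"
    using canonical_App[OF assms(2,3)] by blast
  obtain P ts where u: "u = TC x P ts" and ctu: "is_cterm u"
    and M0: "M0 = psubst ((map_of (zip (fvs (Lam x P)) (map dec ts)))(x:=None)) P"
    using canonical_dec_Lam[OF cu du] by blast
  have ctv: "is_cterm v" using canonical_value cv dv assms(1) by auto
  from ctu u have len: "length ts = length (fvs (Lam x P))" and cts: "\<forall>t\<in>set ts. is_cterm t"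
    by (auto elim: is_cterm.cases)
  define xs where "xs = fvs (Lam x P)"
  define d where "d = TC 0 (Var 0) []"
  have cd: "is_cterm d" unfolding d_def by (rule is_cterm.intros) (auto simp: fvs_def)
  define \<sigma> where "\<sigma> z = (if z = x then v else case map_of (zip xs ts) z of Some s \<Rightarrow> s | None \<Rightarrow> d)" for z
  have c\<sigma>: "\<forall>y. is_cterm (\<sigma> y)"
  proof
    fix y show "is_cterm (\<sigma> y)"
    proof (cases "y = x")
      case False
      show ?thesis
      proof (cases "map_of (zip xs ts) y")
        case (Some s)
        then have "s \<in> set ts" by (auto dest: map_of_SomeD set_zip_rightD)
        then show ?thesis using False Some cts \<sigma>_def by auto
      qed (use False cd \<sigma>_def in auto)
    qed (use ctv \<sigma>_def in auto)
  qed
  have xnot: "x \<notin> set xs" by (simp add: xs_def set_fvs)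
  have dxs: "distinct xs" by (simp add: xs_def distinct_fvs)
  have mapeq: "map \<sigma> xs = ts"
  proof (rule nth_equalityI)
    show "length (map \<sigma> xs) = length ts" using len xs_def by simp
    fix i assume "i < length (map \<sigma> xs)"
    then have i: "i < length xs" by simp
    have "xs ! i \<noteq> x" using xnot i nth_mem by fastforce
    moreover have "map_of (zip xs ts) (xs ! i) = Some (ts ! i)"
      using map_of_zip_nth[of xs ts i] dxs i len xs_def by simp
    ultimately show "map \<sigma> xs ! i = ts ! i" using i \<sigma>_def by simp
  qed
  have rl: "(TApp (TC x P (map TV xs)) (TV x), enc P) \<in> rules"
    unfolding rules_def xs_def by blast
  have lhs: "inst \<sigma> (TApp (TC x P (map TV xs)) (TV x)) = t"
  proof -
    have "\<sigma> x = v" by (simp add: \<sigma>_def)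
    then show ?thesis using mapeq by (simp add: t u comp_def)
  qed
  have step: "rstep t (inst \<sigma> (enc P))"
    using rstep.root[OF rl c\<sigma>] lhs by simp
  let ?\<rho> = "(map_of (zip xs (map dec ts)))(x:=None)"
  have cl: "\<forall>z N. ?\<rho> z = Some N \<longrightarrow> fv N = {}"
  proof (intro allI impI)
    fix z N assume "?\<rho> z = Some N"
    then have "map_of (zip xs (map dec ts)) z = Some N" by (auto split: if_splits)
    then have "(z, N) \<in> set (zip xs (map dec ts))" by (rule map_of_SomeD)
    then have "N \<in> set (map dec ts)" by (rule set_zip_rightD)
    then show "fv N = {}" using cts cterm_closed by auto
  qed
  have "psubst (Map.empty(x \<mapsto> V)) M0 =
      psubst (\<lambda>z. case ?\<rho> z of None \<Rightarrow> (Map.empty(x \<mapsto> V)) z | Some N \<Rightarrow> Some N) P"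
    unfolding M0 xs_def[symmetric] by (rule psubst_comp[OF cl])
  also have "\<dots> = psubst (\<lambda>z. Some (dec (\<sigma> z))) P"
  proof (rule psubst_cong, intro ballI)
    fix z assume z: "z \<in> fv P"
    show "(case ?\<rho> z of None \<Rightarrow> (Map.empty(x \<mapsto> V)) z | Some N \<Rightarrow> Some N) = Some (dec (\<sigma> z))"
    proof (cases "z = x")
      case True then show ?thesis using dv \<sigma>_def by simp
    next
      case False
      then have "z \<in> set xs" using z by (simp add: xs_def set_fvs)
      then obtain s where s: "map_of (zip xs ts) z = Some s"
        using len xs_def by (metis domD dom_map_of_zip)
      then show ?thesis using False \<sigma>_def by (simp add: map_of_zip_map2)
    qed
  qed
  also have "\<dots> = dec (inst \<sigma> (enc P))" by (simp add: dec_inst_enc)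
  finally show ?thesis using step by metis
qed

theorem lemma7:
  assumes "betav M N" and "canonical t" and "dec t = M"
  shows "\<exists>u. rstep t u \<and> dec u = N"
  using assms
proof (induction arbitrary: t rule: betav.induct)
  case (beta V x M)
  then show ?case using beta_case by blast
next
  case (appL M M' L)
  obtain u v where "t = TApp u v" "canonical u" "canonical v" "dec u = M" "dec v = L"
    using canonical_App[OF appL.prems] by blast
  then show ?case using appL.IH[of u] rstep.appL by (metis dec.simps(2))
next
  case (appR M M' L)
  obtain u v where "t = TApp u v" "canonical u" "canonical v" "dec u = L" "dec v = M"
    using canonical_App[OF appR.prems] by blast
  then show ?case using appR.IH[of v] rstep.appR by (metis dec.simps(2))
qed

end
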